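(* Let $\mathcal F=(F,\rightarrowtail)$ be a finite argumentation framework. If $A\subseteq F$ is weakly admissible, then $A$ is contained in some weakly complete extension of $\mathcal F$.
   Context: An argumentation framework $\mathcal F=(F,\rightarrowtail)$ consists of a finite set $F$ of arguments and an attack relation $\rightarrowtail\subseteq F\times F$. An argument $y$ attacks a set $A$ if $y\rightarrowtail a$ for some $a\in A$; $A^+=\{x\in F:\exists a\in A,\ a\rightarrowtail x\}$. A set is conflict-free if none of its elements attacks one of its elements. For $A\subseteq F$, the $A$-reduct $\mathcal F^A$ is the restriction of $\mathcal F$ to $F\setminus(A\cup A^+)$. Weak admissibility (defined recursively on the size of the framework): $A\subseteq F$ is weakly admissible in $\mathcal F$ if $A$ is conflict-free and for every $y\in F$ attacking $A$, $y$ belongs to no weakly admissible set of $\mathcal F^A$. A weakly complete labeling is a map $L:F\to\{\mathtt{in},\mathtt{out},\mathtt{undec}\}$ such that for every $a\in F$: if $L(a)=\mathtt{in}$ then no attacker of $a$ is labeled $\mathtt{in}$; if $L(a)=\mathtt{out}$ then some attacker of $a$ is labeled $\mathtt{in}$; if $L(a)=\mathtt{undec}$ then some attacker of $a$ is labeled $\mathtt{undec}$ and no attacker of $a$ is labeled $\mathtt{in}$. A set is a weakly complete extension if it equals $\{a:L(a)=\mathtt{in}\}$ for some weakly complete labeling $L$. *)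

theory Defs
  imports Main
begin

text \<open>An argumentation framework is given by a carrier set F of arguments and an
attack relation att (a binary predicate); only attacks between elements of F matter.\<close>

definition conflict_free :: "('a \<Rightarrow> 'a \<Rightarrow> bool) \<Rightarrow> 'a set \<Rightarrow> bool" where
  "conflict_free att A \<longleftrightarrow> (\<forall>a\<in>A. \<forall>b\<in>A. \<not> att a b)"

definition attacks_set :: "('a \<Rightarrow> 'a \<Rightarrow> bool) \<Rightarrow> 'a \<Rightarrow> 'a set \<Rightarrow> bool" where
  "attacks_set att y A \<longleftrightarrow> (\<exists>a\<in>A. att y a)"

definition plus_set :: "'a set \<Rightarrow> ('a \<Rightarrow> 'a \<Rightarrow> bool) \<Rightarrow> 'a set \<Rightarrow> 'a set" where
  "plus_set F att A = {x \<in> F. \<exists>a\<in>A. att a x}"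

text \<open>Carrier of the A-reduct; the attack relation of the reduct is the restriction of att,
which (since all quantifications range over the carrier) is represented by att itself.\<close>
definition reduct :: "'a set \<Rightarrow> ('a \<Rightarrow> 'a \<Rightarrow> bool) \<Rightarrow> 'a set \<Rightarrow> 'a set" where
  "reduct F att A = F - (A \<union> plus_set F att A)"

function weakly_admissible :: "'a set \<Rightarrow> ('a \<Rightarrow> 'a \<Rightarrow> bool) \<Rightarrow> 'a set \<Rightarrow> bool" where
  "weakly_admissible F att A =
     (if finite F \<and> A \<subseteq> F \<and> conflict_free att A then
        (\<forall>y\<in>F. attacks_set att y A \<longrightarrow>
           \<not> (\<exists>B. weakly_admissible (reduct F att A) att B \<and> y \<in> B))
      else False)"
  by pat_completeness auto

lemma reduct_psubset:
  assumes "A \<subseteq> F" "A \<noteq> {}"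
  shows "reduct F att A \<subset> F"
  using assms unfolding reduct_def by blast

termination
  by (relation "measure (\<lambda>(F, att, A). card F)")
     (auto intro!: psubset_card_mono reduct_psubset simp: attacks_set_def)

datatype label = In | Out | Undec

definition weakly_complete_labeling ::
  "'a set \<Rightarrow> ('a \<Rightarrow> 'a \<Rightarrow> bool) \<Rightarrow> ('a \<Rightarrow> label) \<Rightarrow> bool" where
  "weakly_complete_labeling F att L \<longleftrightarrow>
     (\<forall>a\<in>F.
        (L a = In \<longrightarrow> (\<forall>b\<in>F. att b a \<longrightarrow> L b \<noteq> In)) \<and>
        (L a = Out \<longrightarrow> (\<exists>b\<in>F. att b a \<and> L b = In)) \<and>
        (L a = Undec \<longrightarrow> (\<exists>b\<in>F. att b a \<and> L b = Undec) \<and> (\<forall>b\<in>F. att b a \<longrightarrow> L b \<noteq> In)))"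

definition weakly_complete_extension :: "'a set \<Rightarrow> ('a \<Rightarrow> 'a \<Rightarrow> bool) \<Rightarrow> 'a set \<Rightarrow> bool" where
  "weakly_complete_extension F att E \<longleftrightarrow>
     (\<exists>L. weakly_complete_labeling F att L \<and> E = {a \<in> F. L a = In})"

end

theory Submission
  imports Defs
begin

declare weakly_admissible.simps[simp del]

lemma wa_basic:
  assumes "weakly_admissible F att B"
  shows "finite F \<and> B \<subseteq> F \<and> conflict_free att B"
  using assms weakly_admissible.simps[of F att B] by (auto split: if_splits)

lemma wa_attack:
  assumes "weakly_admissible F att A" "y \<in> F" "attacks_set att y A"
    "weakly_admissible (reduct F att A) att B"
  shows "y \<notin> B"
  using assms weakly_admissible.simps[of F att A] by (auto split: if_splits)

lemma reduct_sub: "reduct F att A \<subseteq> F"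
  unfolding reduct_def by blast

lemma reduct_insert:
  "reduct (reduct F att {u}) att B = reduct F att (insert u B)"
  unfolding reduct_def plus_set_def by auto

lemma wa_insert:
  assumes fin: "finite F" and u: "u \<in> F" and un: "\<forall>b\<in>F. \<not> att b u"
    and B: "weakly_admissible (reduct F att {u}) att B"
  shows "weakly_admissible F att (insert u B)"
proof -
  have Bb: "B \<subseteq> reduct F att {u}" "conflict_free att B" using wa_basic[OF B] by auto
  have sub: "insert u B \<subseteq> F" using Bb(1) reduct_sub[of F att "{u}"] u by blast
  have cf: "conflict_free att (insert u B)"
  proof -
    have "\<not> att u b" if "b \<in> B" for b
      using Bb(1) that unfolding reduct_def plus_set_def by auto
    moreover have "\<not> att b u" if "b \<in> insert u B" for b using un sub that by auto
    ultimately show ?thesis using Bb(2) unfolding conflict_free_def by auto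
  qed
  have att: "\<not> (\<exists>C. weakly_admissible (reduct F att (insert u B)) att C \<and> y \<in> C)"
    if y: "y \<in> F" "attacks_set att y (insert u B)" for y
  proof
    assume "\<exists>C. weakly_admissible (reduct F att (insert u B)) att C \<and> y \<in> C"
    then obtain C where C: "weakly_admissible (reduct (reduct F att {u}) att B) att C" "y \<in> C"
      using reduct_insert by metis
    have "C \<subseteq> reduct (reduct F att {u}) att B" using wa_basic[OF C(1)] by auto
    hence yR: "y \<in> reduct F att {u}" using C(2) reduct_sub[of "reduct F att {u}" att B] by blast
    have "attacks_set att y B" using y un unfolding attacks_set_def by auto
    from wa_attack[OF B yR this C(1)] C(2) show False by simp
  qed
  show ?thesis using fin sub cf att weakly_admissible.simps[of F att "insert u B"] by auto
qed

lemma wa_single: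
  assumes fin: "finite F" and u: "u \<in> F" and un: "\<forall>b\<in>F. \<not> att b u"
  shows "weakly_admissible F att {u}"
  using assms weakly_admissible.simps[of F att "{u}"]
  unfolding conflict_free_def attacks_set_def by auto

lemma combine:
  assumes sub: "A \<subseteq> F" and cf: "conflict_free att A"
    and L': "weakly_complete_labeling (reduct F att A) att L'"
    and noatt: "\<forall>b\<in>reduct F att A. L' b = In \<longrightarrow> \<not> attacks_set att b A"
  defines "L \<equiv> (\<lambda>x. if x \<in> A then In else if x \<in> plus_set F att A then Out else L' x)"
  shows "weakly_complete_labeling F att L"
  unfolding weakly_complete_labeling_def
proof (intro ballI)
  fix a assume a: "a \<in> F"
  let ?R = "reduct F att A"
  have R: "x \<in> ?R \<longleftrightarrow> x \<in> F \<and> x \<notin> A \<and> x \<notin> plus_set F att A" for x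
    unfolding reduct_def by auto
  have Lr: "x \<in> ?R \<Longrightarrow> L x = L' x" for x unfolding L_def using R by auto
  have LA: "x \<in> A \<Longrightarrow> L x = In" for x unfolding L_def by auto
  have LP: "x \<notin> A \<Longrightarrow> x \<in> plus_set F att A \<Longrightarrow> L x = Out" for x unfolding L_def by auto
  have AP: "x \<in> A \<Longrightarrow> x \<notin> plus_set F att A" for x
    using cf unfolding conflict_free_def plus_set_def by auto
  have noIn: "\<forall>b\<in>F. att b a \<longrightarrow> L b \<noteq> In" if "a \<in> A \<or> a \<in> ?R" and "L a \<noteq> Out"
  proof (intro ballI impI)
    fix b assume b: "b \<in> F" "att b a"
    show "L b \<noteq> In"
    proof (cases "b \<in> A")
      case True
      then show ?thesis
      proof (cases "a \<in> A")
        case True then show ?thesis using cf \<open>b \<in> A\<close> b unfolding conflict_free_def by auto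
      next
        case False
        then have "a \<in> plus_set F att A" using a b True unfolding plus_set_def by auto
        then show ?thesis using that(1) False R[of a] by blast
      qed
    next
      case False
      show ?thesis
      proof (cases "b \<in> plus_set F att A")
        case True then show ?thesis using LP False by auto
      next
        case bP: False
        hence bR: "b \<in> ?R" using R b False by auto
        show ?thesis
        proof (cases "a \<in> A")
          case True
          then have "attacks_set att b A" using b unfolding attacks_set_def by auto
          then show ?thesis using noatt bR Lr by auto
        next
          case False
          then have aR: "a \<in> ?R" using that by auto
          have "L' a \<noteq> Out" using that Lr aR by auto
          then have "L' a = In \<or> L' a = Undec" by (cases "L' a") auto
          then have "L' b \<noteq> In" using L' aR bR b unfolding weakly_complete_labeling_def by blast
          then show ?thesis using Lr bR by auto
        qed
      qed
    qed
  qed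
  have h1: "L a = In \<longrightarrow> (\<forall>b\<in>F. att b a \<longrightarrow> L b \<noteq> In)"
  proof
    assume "L a = In"
    then have "a \<in> A \<or> a \<in> ?R" using R a LP by (cases "a \<in> A"; cases "a \<in> plus_set F att A") auto
    then show "\<forall>b\<in>F. att b a \<longrightarrow> L b \<noteq> In" using noIn \<open>L a = In\<close> by auto
  qed
  have h2: "L a = Undec \<longrightarrow> (\<exists>b\<in>F. att b a \<and> L b = Undec) \<and> (\<forall>b\<in>F. att b a \<longrightarrow> L b \<noteq> In)"
  proof
    assume "L a = Undec"
    then have aR: "a \<in> ?R" using R a LP LA by (cases "a \<in> A"; cases "a \<in> plus_set F att A") auto
    then have n: "\<forall>b\<in>F. att b a \<longrightarrow> L b \<noteq> In" using noIn \<open>L a = Undec\<close> by auto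
    have "L' a = Undec" using Lr aR \<open>L a = Undec\<close> by auto
    then obtain b where "b \<in> ?R" "att b a" "L' b = Undec"
      using L' aR unfolding weakly_complete_labeling_def by blast
    then have "\<exists>b\<in>F. att b a \<and> L b = Undec" using Lr R by auto
    then show "(\<exists>b\<in>F. att b a \<and> L b = Undec) \<and> (\<forall>b\<in>F. att b a \<longrightarrow> L b \<noteq> In)" using n by blast
  qed
  have h3: "L a = Out \<longrightarrow> (\<exists>b\<in>F. att b a \<and> L b = In)"
  proof
    assume "L a = Out"
    show "\<exists>b\<in>F. att b a \<and> L b = In"
    proof (cases "a \<in> ?R")
      case True
      have "L' a = Out" using Lr True \<open>L a = Out\<close> by auto
      then obtain b where "b \<in> ?R" "att b a" "L' b = In"
        using L' True unfolding weakly_complete_labeling_def by blast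
      then show ?thesis using Lr R by auto
    next
      case False
      then have "a \<in> plus_set F att A" using R a \<open>L a = Out\<close> LA by auto
      then obtain b where "b \<in> A" "att b a" unfolding plus_set_def by auto
      then show ?thesis using LA sub by auto
    qed
  qed
  show "(L a = In \<longrightarrow> (\<forall>b\<in>F. att b a \<longrightarrow> L b \<noteq> In)) \<and>
        (L a = Out \<longrightarrow> (\<exists>b\<in>F. att b a \<and> L b = In)) \<and>
        (L a = Undec \<longrightarrow> (\<exists>b\<in>F. att b a \<and> L b = Undec) \<and> (\<forall>b\<in>F. att b a \<longrightarrow> L b \<noteq> In))"
    using h1 h2 h3 by blast
qed

lemma exists_labeling:
  "finite F \<Longrightarrow> \<exists>L. weakly_complete_labeling F att L \<and>
     (\<forall>b\<in>F. L b = In \<longrightarrow> (\<exists>B. weakly_admissible F att B \<and> b \<in> B))"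
proof (induction "card F" arbitrary: F rule: less_induct)
  case less
  show ?case
  proof (cases "\<exists>u\<in>F. \<forall>b\<in>F. \<not> att b u")
    case False
    have "weakly_complete_labeling F att (\<lambda>_. Undec)"
      using False unfolding weakly_complete_labeling_def by auto
    then show ?thesis by auto
  next
    case True
    then obtain u where u: "u \<in> F" "\<forall>b\<in>F. \<not> att b u" by blast
    let ?R = "reduct F att {u}"
    have "?R \<subset> F" using reduct_psubset[of "{u}" F att] u by auto
    hence lt: "card ?R < card F" using less.prems psubset_card_mono by blast
    have finR: "finite ?R" using less.prems reduct_sub[of F att "{u}"] finite_subset by metis
    obtain L' where L': "weakly_complete_labeling ?R att L'"
      "\<forall>b\<in>?R. L' b = In \<longrightarrow> (\<exists>B. weakly_admissible ?R att B \<and> b \<in> B)"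
      using less.hyps[OF lt finR] by blast
    define L where "L \<equiv> (\<lambda>x. if x \<in> {u} then In else if x \<in> plus_set F att {u} then Out else L' x)"
    have na: "\<forall>b\<in>?R. L' b = In \<longrightarrow> \<not> attacks_set att b {u}"
      using u reduct_sub[of F att "{u}"] unfolding attacks_set_def by blast
    have cf: "conflict_free att {u}" using u unfolding conflict_free_def by auto
    have WL: "weakly_complete_labeling F att L"
      using combine[OF _ cf L'(1) na] u unfolding L_def by auto
    have "\<exists>B. weakly_admissible F att B \<and> b \<in> B" if b: "b \<in> F" "L b = In" for b
    proof (cases "b = u")
      case True
      then show ?thesis using wa_single[of F u att, OF less.prems u] by auto
    next
      case False
      then have bR: "b \<in> ?R" "L' b = In" using b unfolding L_def reduct_def by (auto split: if_splits)
      then obtain B where "weakly_admissible ?R att B" "b \<in> B" using L'(2) by blast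
      then show ?thesis using wa_insert[of F u att, OF less.prems u] by blast
    qed
    then show ?thesis using WL by blast
  qed
qed

theorem mainTheorem16:
  fixes F :: "'a set" and att :: "'a \<Rightarrow> 'a \<Rightarrow> bool" and A :: "'a set"
  assumes "finite F"
    and "weakly_admissible F att A"
  shows "\<exists>E. weakly_complete_extension F att E \<and> A \<subseteq> E"
proof -
  let ?R = "reduct F att A"
  have Ab: "A \<subseteq> F" "conflict_free att A" using wa_basic[OF assms(2)] by auto
  have finR: "finite ?R" using assms(1) reduct_sub[of F att A] finite_subset by metis
  obtain L' where L': "weakly_complete_labeling ?R att L'"
    "\<forall>b\<in>?R. L' b = In \<longrightarrow> (\<exists>B. weakly_admissible ?R att B \<and> b \<in> B)"
    using exists_labeling[OF finR] by blast
  have na: "\<forall>b\<in>?R. L' b = In \<longrightarrow> \<not> attacks_set att b A"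
    using L'(2) wa_attack[OF assms(2)] reduct_sub[of F att A] by blast
  define L where "L \<equiv> (\<lambda>x. if x \<in> A then In else if x \<in> plus_set F att A then Out else L' x)"
  have WL: "weakly_complete_labeling F att L"
    using combine[OF Ab L'(1) na] unfolding L_def by auto
  have "A \<subseteq> {a \<in> F. L a = In}" using Ab unfolding L_def by auto
  then show ?thesis using WL unfolding weakly_complete_extension_def by blast
qed

end
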